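(* For all integers $n\ge 0$, $k\ge 0$, $d\ge 0$ with $(n,k,d)\neq(0,0,1)$, \[ p_n^{(\mathrm{pk},\mathrm{des})}(k,d)+p_n^{(\mathrm{pk},\mathrm{des})}(k,d-1)=\sum_{l,i,j}\binom{n}{l}\, b_l^{(\mathrm{pk},\mathrm{des})}(i,j)\, b_{n-l}^{(\mathrm{pk},\mathrm{des})}(k-i,\,d-l+j), \] where the sum runs over all integers $l,i,j$.
   Context: For a permutation $\pi=\pi_1\cdots\pi_n$ of $[n]$, a descent is a position $1\le i\le n-1$ with $\pi_i>\pi_{i+1}$, an ascent one with $\pi_i<\pi_{i+1}$; $\operatorname{des}(\pi)$, $\operatorname{asc}(\pi)$ are their numbers. A peak is a position $2\le i\le n-1$ with $\pi_{i-1}<\pi_i>\pi_{i+1}$; $\operatorname{pk}(\pi)$ is the number of peaks. A ballot permutation is a permutation $\pi$ with $\operatorname{asc}(\pi_1\cdots\pi_i)\ge\operatorname{des}(\pi_1\cdots\pi_i)$ for all $i\in[n]$; $\mathscr B_n$ is the set of ballot permutations of $[n]$, and $\mathscr B_0=\{\epsilon\}$ consists of the empty permutation (and $\mathcal S_0=\{\epsilon\}$), with $\operatorname{pk}(\epsilon)=\operatorname{des}(\epsilon)=0$. Define $p_n^{(\mathrm{pk},\mathrm{des})}(k,d)=|\{\pi\in\mathcal S_n:\operatorname{pk}(\pi)=k,\operatorname{des}(\pi)=d\}|$ and $b_n^{(\mathrm{pk},\mathrm{des})}(k,d)=|\{\pi\in\mathscr B_n:\operatorname{pk}(\pi)=k,\operatorname{des}(\pi)=d\}|$;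 these are $0$ if any of $n,k,d$ is negative. Binomial coefficients $\binom{n}{l}$ are $0$ unless $0\le l\le n$. *)

theory Defs
  imports Main
begin

text \<open>Permutations of [n] are represented as lists xs with distinct xs and set xs = {1..n};
  list positions are 0-indexed, so paper position i corresponds to list index i-1.\<close>

definition perms :: "nat \<Rightarrow> nat list set" where
  "perms n = {xs. distinct xs \<and> set xs = {1..n}}"

definition des :: "nat list \<Rightarrow> nat" where
  "des xs = card {i. Suc i < length xs \<and> xs ! i > xs ! Suc i}"

definition asc :: "nat list \<Rightarrow> nat" where
  "asc xs = card {i. Suc i < length xs \<and> xs ! i < xs ! Suc i}"

definition pk :: "nat list \<Rightarrow> nat" where
  "pk xs = card {i. 1 \<le> i \<and> Suc i < length xs \<and> xs ! (i - 1) < xs ! i \<and> xs ! i > xs ! Suc i}"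

definition ballot :: "nat \<Rightarrow> nat list set" where
  "ballot n = {xs \<in> perms n. \<forall>i\<in>{1..n}. asc (take i xs) \<ge> des (take i xs)}"

definition p_pkdes :: "int \<Rightarrow> int \<Rightarrow> int \<Rightarrow> int" where
  "p_pkdes n k d = (if n < 0 \<or> k < 0 \<or> d < 0 then 0 else
     int (card {xs \<in> perms (nat n). int (pk xs) = k \<and> int (des xs) = d}))"

definition b_pkdes :: "int \<Rightarrow> int \<Rightarrow> int \<Rightarrow> int" where
  "b_pkdes n k d = (if n < 0 \<or> k < 0 \<or> d < 0 then 0 else
     int (card {xs \<in> ballot (nat n). int (pk xs) = k \<and> int (des xs) = d}))"

definition binom :: "int \<Rightarrow> int \<Rightarrow> int" where
  "binom n l = (if 0 \<le> l \<and> l \<le> n then int (nat n choose nat l) else 0)"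

end

theory Submission
  imports Defs
begin

fun dR :: "nat list \<Rightarrow> nat" where
  "dR (x # y # zs) = (if y < x then 1 else 0) + dR (y # zs)"
| "dR _ = 0"

fun aR :: "nat list \<Rightarrow> nat" where
  "aR (x # y # zs) = (if x < y then 1 else 0) + aR (y # zs)"
| "aR _ = 0"

fun pR :: "nat list \<Rightarrow> nat" where
  "pR (x # y # z # zs) = (if x < y \<and> z < y then 1 else 0) + pR (y # z # zs)"
| "pR _ = 0"

lemma card_Suc_split:
  "card {i. i < Suc m \<and> Q i} = (if Q 0 then 1 else 0) + card {i. i < m \<and> Q (Suc i)}"
proof -
  have e: "{i. i < Suc m \<and> Q i} = (if Q 0 then {0} else {}) \<union> Suc ` {i. i < m \<and> Q (Suc i)}"
    by (auto simp: less_Suc_eq_0_disj)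
  have "card (Suc ` {i. i < m \<and> Q (Suc i)}) = card {i. i < m \<and> Q (Suc i)}"
    by (rule card_image) simp
  then show ?thesis unfolding e by (auto simp: card_insert_if)
qed

lemma des_eq: "des xs = dR xs"
proof (induction xs rule: dR.induct)
  case (1 x y zs)
  have "des (x # y # zs) = card {i. i < Suc (length zs) \<and> (x#y#zs) ! i > (x#y#zs) ! Suc i}"
    unfolding des_def by (rule arg_cong[where f=card]) auto
  also have "\<dots> = (if y < x then 1 else 0) + card {i. i < length zs \<and> (y#zs) ! i > (y#zs) ! Suc i}"
    by (subst card_Suc_split) simp
  also have "card {i. i < length zs \<and> (y#zs) ! i > (y#zs) ! Suc i} = des (y # zs)"
    unfolding des_def by (rule arg_cong[where f=card]) auto
  finally show ?case using 1 by simp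
qed (auto simp: des_def)

lemma asc_eq: "asc xs = aR xs"
proof (induction xs rule: aR.induct)
  case (1 x y zs)
  have "asc (x # y # zs) = card {i. i < Suc (length zs) \<and> (x#y#zs) ! i < (x#y#zs) ! Suc i}"
    unfolding asc_def by (rule arg_cong[where f=card]) auto
  also have "\<dots> = (if x < y then 1 else 0) + card {i. i < length zs \<and> (y#zs) ! i < (y#zs) ! Suc i}"
    by (subst card_Suc_split) simp
  also have "card {i. i < length zs \<and> (y#zs) ! i < (y#zs) ! Suc i} = asc (y # zs)"
    unfolding asc_def by (rule arg_cong[where f=card]) auto
  finally show ?case using 1 by simp
qed (auto simp: asc_def)

lemma pk_alt: "pk xs = card {j. Suc (Suc j) < length xs \<and> xs ! j < xs ! Suc j \<and> xs ! Suc j > xs ! Suc (Suc j)}"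
proof -
  have "{i. 1 \<le> i \<and> Suc i < length xs \<and> xs ! (i - 1) < xs ! i \<and> xs ! i > xs ! Suc i}
     = Suc ` {j. Suc (Suc j) < length xs \<and> xs ! j < xs ! Suc j \<and> xs ! Suc j > xs ! Suc (Suc j)}"
    by (auto simp: image_iff) (metis One_nat_def Suc_pred diff_Suc_1 not_one_le_zero zero_less_iff_neq_zero)
  then show ?thesis unfolding pk_def by (simp add: card_image)
qed

lemma pk_eq: "pk xs = pR xs"
proof (induction xs rule: pR.induct)
  case (1 x y z zs)
  have "pk (x # y # z # zs) = card {j. j < Suc (length zs) \<and> (x#y#z#zs) ! j < (x#y#z#zs) ! Suc j \<and> (x#y#z#zs) ! Suc j > (x#y#z#zs) ! Suc (Suc j)}"
    unfolding pk_alt by (rule arg_cong[where f=card]) auto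
  also have "\<dots> = (if x < y \<and> z < y then 1 else 0) + card {j. j < length zs \<and> (y#z#zs) ! j < (y#z#zs) ! Suc j \<and> (y#z#zs) ! Suc j > (y#z#zs) ! Suc (Suc j)}"
    by (subst card_Suc_split) simp
  also have "card {j. j < length zs \<and> (y#z#zs) ! j < (y#z#zs) ! Suc j \<and> (y#z#zs) ! Suc j > (y#z#zs) ! Suc (Suc j)} = pk (y # z # zs)"
    unfolding pk_alt by (rule arg_cong[where f=card]) auto
  finally show ?case using 1 by simp
qed (auto simp: pk_alt)



lemma dR_append: "dR (xs @ ys) = dR xs + dR ys + (if xs \<noteq> [] \<and> ys \<noteq> [] \<and> hd ys < last xs then 1 else 0)"
proof (induction xs)
  case Nil then show ?case by simp
next
  case (Cons x xs)
  then show ?case by (cases xs; cases ys) auto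
qed

lemma aR_append: "aR (xs @ ys) = aR xs + aR ys + (if xs \<noteq> [] \<and> ys \<noteq> [] \<and> last xs < hd ys then 1 else 0)"
proof (induction xs)
  case Nil then show ?case by simp
next
  case (Cons x xs)
  then show ?case by (cases xs; cases ys) auto
qed

lemma pR_short: "length xs \<le> 2 \<Longrightarrow> pR xs = 0"
  by (induction xs rule: pR.induct) auto

lemma pR_append: "pR (xs @ ys) = pR xs + pR ys
   + (if length xs \<ge> 2 \<and> ys \<noteq> [] \<and> xs ! (length xs - 2) < last xs \<and> hd ys < last xs then 1 else 0)
   + (if xs \<noteq> [] \<and> length ys \<ge> 2 \<and> last xs < hd ys \<and> ys ! 1 < hd ys then 1 else 0)"
apply (induction xs rule: pR.induct)
  subgoal for x y z zs by (cases zs) (auto simp: nth_append)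
  subgoal by (cases ys rule: pR.cases) simp_all
  subgoal by (cases ys rule: pR.cases) simp_all
  subgoal by (cases ys rule: pR.cases) simp_all
  done

lemma dR_rev: "dR (rev xs) = aR xs"
proof (induction xs)
  case (Cons x xs) then show ?case by (cases xs) (auto simp: dR_append last_rev)
qed simp

lemma aR_rev: "aR (rev xs) = dR xs"
proof (induction xs)
  case (Cons x xs) then show ?case by (cases xs) (auto simp: aR_append last_rev)
qed simp

lemma pR_rev: "pR (rev xs) = pR xs"
proof (induction xs rule: pR.induct)
  case (1 x y z zs)
  have "pR (rev (x # y # z # zs)) = pR ((rev zs @ [z, y]) @ [x])" by simp
  also have "\<dots> = pR (rev zs @ [z, y]) + (if x < y \<and> z < y then 1 else 0)"
    using pR_append[of "rev zs @ [z, y]" "[x]"] by (simp add: nth_append)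
  finally show ?case using 1 by simp
qed (auto)

lemma aR_dR_len: "distinct xs \<Longrightarrow> aR xs + dR xs = length xs - 1"
  by (induction xs rule: dR.induct) (auto simp: neq_iff)

lemma aR_map: "(\<forall>a\<in>set xs. \<forall>b\<in>set xs. f a < f b \<longleftrightarrow> a < b) \<Longrightarrow> aR (map f xs) = aR xs"
  by (induction xs rule: aR.induct) auto
lemma dR_map: "(\<forall>a\<in>set xs. \<forall>b\<in>set xs. f a < f b \<longleftrightarrow> a < b) \<Longrightarrow> dR (map f xs) = dR xs"
  by (induction xs rule: dR.induct) auto
lemma pR_map: "(\<forall>a\<in>set xs. \<forall>b\<in>set xs. f a < f b \<longleftrightarrow> a < b) \<Longrightarrow> pR (map f xs) = pR xs"
  by (induction xs rule: pR.induct) auto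

definition H :: "nat list \<Rightarrow> nat \<Rightarrow> int" where
  "H xs t = int (aR (take t xs)) - int (dR (take t xs))"

definition bal :: "nat list \<Rightarrow> bool" where
  "bal xs = (\<forall>t\<in>{1..length xs}. dR (take t xs) \<le> aR (take t xs))"

lemma bal_H: "bal xs \<longleftrightarrow> (\<forall>t. H xs t \<ge> 0)"
proof
  assume b: "bal xs"
  show "\<forall>t. H xs t \<ge> 0"
  proof
    fix t
    show "H xs t \<ge> 0"
    proof (cases "t = 0")
      case True then show ?thesis by (simp add: H_def)
    next
      case False
      show ?thesis
      proof (cases "t \<le> length xs")
        case True then show ?thesis using b False by (auto simp: bal_def H_def)
      next
        case f2: False
        show ?thesis
        proof (cases "xs = []")
          case True then show ?thesis by (simp add: H_def)
        next
          case xne: False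
          then have "length xs \<in> {1..length xs}" by (cases xs) auto
          then have "dR (take (length xs) xs) \<le> aR (take (length xs) xs)"
            using b unfolding bal_def by blast
          then show ?thesis using f2 by (simp add: H_def)
        qed
      qed
    qed
  qed
next
  assume "\<forall>t. H xs t \<ge> 0"
  then show "bal xs" by (auto simp: bal_def H_def)
qed

lemma H_0[simp]: "H xs 0 = 0" by (simp add: H_def)
lemma H_1[simp]: "H xs 1 = 0" by (cases xs) (auto simp: H_def)
lemma H_big: "length xs \<le> s \<Longrightarrow> H xs s = H xs (length xs)" by (simp add: H_def)
lemma H_take: "s \<le> m \<Longrightarrow> H (take m xs) s = H xs s" by (simp add: H_def min_def)

lemma H_split: "1 \<le> t \<Longrightarrow> H xs (a + t) = H xs (a + 1) + H (drop a xs) t"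
proof (cases "drop a xs")
  case Nil
  then have "length xs \<le> a" by simp
  then show ?thesis by (simp add: H_def)
next
  case (Cons y ys)
  assume t: "1 \<le> t"
  have e1: "take (a + t) xs = take a xs @ take t (drop a xs)" by (simp add: take_add)
  have al: "a < length xs" using Cons by (metis drop_all list.distinct(1) not_less)
  have ay: "xs ! a = y" using Cons by (metis hd_drop_conv_nth list.sel(1) al)
  have e2: "take (a + 1) xs = take a xs @ [y]" using al ay by (simp add: take_Suc_conv_app_nth)
  have e3: "take t (drop a xs) = y # take (t - 1) ys" using Cons t by (cases t) auto
  show ?thesis unfolding H_def e1 e2 e3
    by (simp add: aR_append dR_append)
qed

lemma H_step:
  assumes "distinct xs" "1 \<le> m" "m < length xs"
  shows "H xs (m + 1) = H xs m + (if xs ! (m - 1) < xs ! m then 1 else -1)"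
proof -
  have e: "take (m + 1) xs = take m xs @ [xs ! m]" using assms by (simp add: take_Suc_conv_app_nth)
  have l: "last (take m xs) = xs ! (m - 1)" 
  proof -
    have tne: "take m xs \<noteq> []" using assms by (cases xs) auto
    have "length (take m xs) = m" using assms by simp
    then show ?thesis using tne assms by (simp add: last_conv_nth)
  qed
  have ne: "xs ! (m - 1) \<noteq> xs ! m" using assms by (simp add: nth_eq_iff_index_eq)
  have "take m xs \<noteq> []" using assms by (cases xs) auto
  then show ?thesis unfolding H_def e using l ne by (auto simp: aR_append dR_append)
qed

lemma bal_drop: "bal (drop m xs) \<longleftrightarrow> (\<forall>s. m + 1 \<le> s \<longrightarrow> H xs (m + 1) \<le> H xs s)"
proof -
  have "bal (drop m xs) \<longleftrightarrow> (\<forall>t. 1 \<le> t \<longrightarrow> H (drop m xs) t \<ge> 0)"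
    unfolding bal_H apply (rule iffI) apply blast apply (intro allI)
    subgoal for t by (cases t) auto done
  also have "\<dots> \<longleftrightarrow> (\<forall>t. 1 \<le> t \<longrightarrow> H xs (m + 1) \<le> H xs (m + t))"
    using H_split by auto
  also have "\<dots> \<longleftrightarrow> (\<forall>s. m + 1 \<le> s \<longrightarrow> H xs (m + 1) \<le> H xs s)"
    apply (rule iffI)
     apply (intro allI impI)
    subgoal for s by (drule spec[of _ "s - m"]) auto
    by auto
  finally show ?thesis .
qed

lemma H_rev_take:
  assumes "m \<le> length xs" "1 \<le> t" "t \<le> m"
  shows "H (rev (take m xs)) t = H xs (m - t + 1) - H xs m"
proof -
  let ?a = "take m xs"
  let ?seg = "drop (m - t) ?a"
  have la: "length ?a = m" using assms by simp
  have ls: "length ?seg = t" using assms by simp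
  have tr: "take t (rev ?a) = rev ?seg" by (metis take_rev la)
  have "H (rev ?a) t = int (dR ?seg) - int (aR ?seg)"
    unfolding H_def tr by (simp add: aR_rev dR_rev)
  moreover have "H ?seg t = int (aR ?seg) - int (dR ?seg)" using ls by (simp add: H_def)
  moreover have "H ?a (m - t + t) = H ?a (m - t + 1) + H ?seg t" by (rule H_split) (use assms in auto)
  moreover have "H ?a m = H xs m" "H ?a (m - t + 1) = H xs (m - t + 1)" using assms by (auto simp: H_take)
  ultimately show ?thesis using assms by simp
qed

lemma bal_rev_take:
  assumes "m \<le> length xs"
  shows "bal (rev (take m xs)) \<longleftrightarrow> (\<forall>s. 1 \<le> s \<and> s \<le> m \<longrightarrow> H xs m \<le> H xs s)"
proof
  assume b: "bal (rev (take m xs))"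
  show "\<forall>s. 1 \<le> s \<and> s \<le> m \<longrightarrow> H xs m \<le> H xs s"
  proof (intro allI impI)
    fix s assume s: "1 \<le> s \<and> s \<le> m"
    have "H (rev (take m xs)) (m - s + 1) \<ge> 0" using b bal_H by blast
    moreover have "H (rev (take m xs)) (m - s + 1) = H xs (m - (m - s + 1) + 1) - H xs m"
      by (rule H_rev_take) (use assms s in auto)
    moreover have "m - (m - s + 1) + 1 = s" using s by simp
    ultimately show "H xs m \<le> H xs s" by simp
  qed
next
  assume r: "\<forall>s. 1 \<le> s \<and> s \<le> m \<longrightarrow> H xs m \<le> H xs s"
  have "H (rev (take m xs)) t \<ge> 0" for t
  proof (cases "1 \<le> t \<and> t \<le> m")
    case True
    then show ?thesis using H_rev_take[OF assms, of t] r[rule_format, of "m - t + 1"] by auto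
  next
    case False
    show ?thesis
    proof (cases "t = 0")
      case True then show ?thesis by simp
    next
      case f: False
      then have "m < t" using False by auto
      then have "H (rev (take m xs)) t = H (rev (take m xs)) m" using assms by (subst H_big) auto
      moreover have "H (rev (take m xs)) m \<ge> 0" 
      proof (cases "m = 0")
        case True then show ?thesis by simp
      next
        case False
        then show ?thesis using H_rev_take[OF assms, of m] r[rule_format, of 1] by auto
      qed
      ultimately show ?thesis by simp
    qed
  qed
  then show "bal (rev (take m xs))" using bal_H by blast
qed



definition V :: "nat list \<Rightarrow> nat \<Rightarrow> bool" where
  "V xs m = (m \<le> length xs \<and> bal (rev (take m xs)) \<and> bal (drop m xs))"

definition w :: "nat list \<Rightarrow> nat \<Rightarrow> int" where
  "w xs m = int (dR (drop m xs)) + int m - int (aR (take m xs))"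

lemma last_take: assumes "1 \<le> m" "m \<le> length xs" shows "last (take m xs) = xs ! (m - 1)"
proof -
  have tne: "take m xs \<noteq> []" using assms by (cases xs) auto
  have "length (take m xs) = m" using assms by simp
  then show ?thesis using tne assms by (simp add: last_conv_nth)
qed

lemma V_H: "V xs m \<longleftrightarrow> m \<le> length xs \<and> (\<forall>s. 1 \<le> s \<and> s \<le> m \<longrightarrow> H xs m \<le> H xs s)
   \<and> (\<forall>s. m + 1 \<le> s \<longrightarrow> H xs (m + 1) \<le> H xs s)"
  unfolding V_def using bal_rev_take bal_drop by blast

lemma w_0: "w xs 0 = int (dR xs)" by (simp add: w_def)

lemma w_N: assumes "distinct xs" "xs \<noteq> []" shows "w xs (length xs) = int (dR xs) + 1"
proof -
  have "aR xs + dR xs = length xs - 1" using assms aR_dR_len by blast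
  moreover have "length xs \<ge> 1" using assms by (cases xs) auto
  ultimately show ?thesis by (simp add: w_def)
qed

lemma w_mid:
  assumes "distinct xs" "1 \<le> m" "m < length xs"
  shows "w xs m = int (dR xs) + (if xs ! (m - 1) < xs ! m then 1 else 0)"
proof -
  let ?a = "take m xs" and ?b = "drop m xs"
  have ne: "?a \<noteq> []" "?b \<noteq> []" using assms by (cases xs; auto)+
  have la: "length ?a = m" using assms by simp
  have l: "last ?a = xs ! (m - 1)" using assms by (simp add: last_take)
  have h: "hd ?b = xs ! m" using assms by (simp add: hd_drop_conv_nth)
  have da: "distinct ?a" using assms by simp
  have "aR ?a + dR ?a = m - 1" using aR_dR_len[OF da] la by simp
  moreover have "dR xs = dR ?a + dR ?b + (if xs ! m < xs ! (m - 1) then 1 else 0)"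
    using dR_append[of ?a ?b] ne l h by simp
  moreover have "xs ! (m - 1) \<noteq> xs ! m" using assms by (simp add: nth_eq_iff_index_eq)
  ultimately show ?thesis using assms by (auto simp: w_def)
qed

lemma pk_split:
  assumes d: "distinct xs" and v: "V xs m"
  shows "pR xs = pR (take m xs) + pR (drop m xs)"
proof -
  let ?a = "take m xs" and ?b = "drop m xs"
  have vv: "m \<le> length xs" "\<forall>s. 1 \<le> s \<and> s \<le> m \<longrightarrow> H xs m \<le> H xs s"
      "\<forall>s. m + 1 \<le> s \<longrightarrow> H xs (m + 1) \<le> H xs s" using v V_H by blast+
  have la: "length ?a = m" using vv by simp
  have c1: "\<not> (length ?a \<ge> 2 \<and> ?b \<noteq> [] \<and> ?a ! (length ?a - 2) < last ?a)"
  proof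
    assume a: "length ?a \<ge> 2 \<and> ?b \<noteq> [] \<and> ?a ! (length ?a - 2) < last ?a"
    then have m2: "m \<ge> 2" "m < length xs" using la by auto
    have "last ?a = xs ! (m - 1)" using m2 by (simp add: last_take)
    moreover have "?a ! (length ?a - 2) = xs ! (m - 2)" using la m2 by simp
    ultimately have lt: "xs ! (m - 2) < xs ! (m - 1)" using a by simp
    have "H xs (m - 1 + 1) = H xs (m - 1) + (if xs ! (m - 1 - 1) < xs ! (m - 1) then 1 else -1)"
      by (rule H_step) (use d m2 in auto)
    moreover have "m - 1 + 1 = m" "m - 1 - 1 = m - 2" using m2 by auto
    ultimately have "H xs m = H xs (m - 1) + 1" using lt by simp
    moreover have "H xs m \<le> H xs (m - 1)" using vv(2) m2 by auto
    ultimately show False by simp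
  qed
  have c2: "\<not> (?a \<noteq> [] \<and> length ?b \<ge> 2 \<and> ?b ! 1 < hd ?b)"
  proof
    assume a: "?a \<noteq> [] \<and> length ?b \<ge> 2 \<and> ?b ! 1 < hd ?b"
    then have m2: "m \<ge> 1" "m + 1 < length xs" using la by auto
    have "hd ?b = xs ! m" using m2 by (simp add: hd_drop_conv_nth)
    moreover have "?b ! 1 = xs ! (m + 1)" using m2 by simp
    ultimately have lt: "xs ! (m + 1) < xs ! m" using a by simp
    have "H xs (m + 1 + 1) = H xs (m + 1) + (if xs ! (m + 1 - 1) < xs ! (m + 1) then 1 else -1)"
      by (rule H_step) (use d m2 in auto)
    then have "H xs (m + 2) = H xs (m + 1) - 1" using lt by simp
    moreover have "H xs (m + 1) \<le> H xs (m + 2)" using vv(3) by auto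
    ultimately show False by simp
  qed
  have "pR (?a @ ?b) = pR ?a + pR ?b" using pR_append[of ?a ?b] c1 c2 by auto
  then show ?thesis by simp
qed

lemma core:
  assumes d: "distinct xs" and ne: "xs \<noteq> []"
  shows "card {m. V xs m \<and> w xs m = int (dR xs)} = 1"
    and "card {m. V xs m \<and> w xs m = int (dR xs) + 1} = 1"
proof -
  define N where "N = length xs"
  define h where "h = H xs"
  have N1: "1 \<le> N" using ne by (cases xs) (auto simp: N_def)
  have hbig: "\<And>s. N \<le> s \<Longrightarrow> h s = h N" unfolding h_def N_def by (rule H_big)
  have step: "\<And>m. 1 \<le> m \<Longrightarrow> m < N \<Longrightarrow> h (m + 1) = h m + (if xs ! (m - 1) < xs ! m then 1 else -1)"
    unfolding h_def N_def using H_step d by blast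
  have VH: "\<And>m. V xs m \<longleftrightarrow> m \<le> N \<and> (\<forall>s. 1 \<le> s \<and> s \<le> m \<longrightarrow> h m \<le> h s)
   \<and> (\<forall>s. m + 1 \<le> s \<longrightarrow> h (m + 1) \<le> h s)" unfolding h_def N_def by (rule V_H)
  have w0: "w xs 0 = int (dR xs)" by (rule w_0)
  have wN: "w xs N = int (dR xs) + 1" unfolding N_def using d ne by (rule w_N)
  have wm: "\<And>m. 1 \<le> m \<Longrightarrow> m < N \<Longrightarrow> w xs m = int (dR xs) + (if xs ! (m - 1) < xs ! m then 1 else 0)"
    unfolding N_def using w_mid d by blast
  define S where "S = {s. 1 \<le> s \<and> s \<le> N}"
  have fS: "finite S" "S \<noteq> {}" using N1 by (auto simp: S_def)
  define \<mu> where "\<mu> = Min (h ` S)"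
  have mu_le: "\<And>s. s \<in> S \<Longrightarrow> \<mu> \<le> h s" using fS by (auto simp: \<mu>_def)
  have "\<mu> \<in> h ` S" using fS unfolding \<mu>_def by (intro Min_in) auto
  define T where "T = {s \<in> S. h s = \<mu>}"
  have fT: "finite T" "T \<noteq> {}" using fS \<open>\<mu> \<in> h ` S\<close> by (auto simp: T_def)
  define f where "f = Min T"
  define L where "L = Max T"
  have fT': "f \<in> T" "L \<in> T" using fT by (auto simp: f_def L_def)
  have f_least: "\<And>s. s \<in> T \<Longrightarrow> f \<le> s" using fT by (auto simp: f_def)
  have L_great: "\<And>s. s \<in> T \<Longrightarrow> s \<le> L" using fT by (auto simp: L_def)
  have hf: "1 \<le> f" "f \<le> N" "h f = \<mu>" using fT' by (auto simp: T_def S_def)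
  have hL: "1 \<le> L" "L \<le> N" "h L = \<mu>" using fT' by (auto simp: T_def S_def)
  have mu_all: "\<And>s. 1 \<le> s \<Longrightarrow> \<mu> \<le> h s"
  proof -
    fix s :: nat assume "1 \<le> s"
    show "\<mu> \<le> h s"
    proof (cases "s \<le> N")
      case True then show ?thesis using mu_le \<open>1 \<le> s\<close> by (auto simp: S_def)
    next
      case False then show ?thesis using hbig[of s] mu_le[of N] N1 by (auto simp: S_def)
    qed
  qed
  have before_f: "\<And>s. 1 \<le> s \<Longrightarrow> s < f \<Longrightarrow> \<mu> < h s"
  proof -
    fix s assume s: "1 \<le> s" "s < f"
    then have "s \<in> S" using hf by (auto simp: S_def)
    moreover have "s \<notin> T" using f_least[of s] s by auto
    ultimately show "\<mu> < h s" using mu_le[of s] by (auto simp: T_def)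
  qed
  have after_L: "\<And>s. L < s \<Longrightarrow> L < N \<Longrightarrow> \<mu> < h s"
  proof -
    fix s assume s: "L < s" and LN: "L < N"
    have nT: "\<And>t. t \<in> S \<Longrightarrow> L < t \<Longrightarrow> \<mu> < h t"
    proof -
      fix t assume t: "t \<in> S" "L < t"
      have "t \<notin> T" using L_great[of t] t by auto
      then show "\<mu> < h t" using mu_le[of t] t by (auto simp: T_def)
    qed
    show "\<mu> < h s"
    proof (cases "s \<le> N")
      case True
      then have "s \<in> S" using hL s by (auto simp: S_def)
      then show ?thesis using nT s by blast
    next
      case False
      then have "h s = h N" using hbig[of s] by simp
      moreover have "N \<in> S" using N1 by (auto simp: S_def)
      ultimately show ?thesis using nT[of N] LN by simp
    qed
  qed
  show "card {m. V xs m \<and> w xs m = int (dR xs)} = 1"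
  proof -
    have "{m. V xs m \<and> w xs m = int (dR xs)} = {f - 1}"
    proof (intro equalityI subsetI)
      fix m assume "m \<in> {m. V xs m \<and> w xs m = int (dR xs)}"
      then have v: "V xs m" and wm0: "w xs m = int (dR xs)" by auto
      have vv: "m \<le> N" "\<forall>s. 1 \<le> s \<and> s \<le> m \<longrightarrow> h m \<le> h s" "\<forall>s. m + 1 \<le> s \<longrightarrow> h (m + 1) \<le> h s"
        using v unfolding VH by auto
      have "m \<noteq> N" using wm0 wN by auto
      then have mN: "m < N" using vv by auto
      have "m + 1 = f"
      proof (cases "m = 0")
        case True
        have "h 1 \<le> \<mu>" using vv(3) True \<open>\<mu> \<in> h ` S\<close> by (auto simp: S_def)
        then have "1 \<in> T" using mu_le[of 1] N1 by (auto simp: T_def S_def)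
        then have "f \<le> 1" using f_least by blast
        then show ?thesis using hf True by simp
      next
        case False
        then have m1: "1 \<le> m" by simp
        have hstep: "h (m + 1) = h m - 1"
          using step[OF m1 mN] wm[OF m1 mN] wm0 by (auto split: if_splits)
        have low: "h (m + 1) \<le> h s" if "s \<in> S" for s
        proof (cases "s \<le> m")
          case True then show ?thesis using vv(2) that hstep by (auto simp: S_def)
        next
          case False then show ?thesis using vv(3) by auto
        qed
        then have "h (m + 1) \<le> \<mu>" using \<open>\<mu> \<in> h ` S\<close> by auto
        moreover have "\<mu> \<le> h (m + 1)" using mu_all by simp
        ultimately have hm1: "h (m + 1) = \<mu>" by simp
        then have "m + 1 \<in> T" using mN by (auto simp: T_def S_def)
        then have fle: "f \<le> m + 1" using f_least by blast
        show ?thesis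
        proof (rule ccontr)
          assume "m + 1 \<noteq> f"
          then have "f \<le> m" using fle by simp
          then have "h m \<le> h f" using vv(2) hf by auto
          then show False using hm1 hf hstep by simp
        qed
      qed
      then show "m \<in> {f - 1}" by auto
    next
      fix m assume "m \<in> {f - 1}"
      then have m: "m = f - 1" by simp
      show "m \<in> {m. V xs m \<and> w xs m = int (dR xs)}"
      proof (cases "f = 1")
        case True
        then have m0: "m = 0" using m by simp
        have "V xs 0" unfolding VH using mu_all hf True by auto
        then show ?thesis using m0 w0 by simp
      next
        case False
        then have m1: "1 \<le> m" "m < N" "m + 1 = f" using m hf by auto
        have "\<mu> < h m" using before_f[of m] m1 by auto
        then have dsc: "\<not> xs ! (m - 1) < xs ! m" using step[OF m1(1,2)] m1(3) hf by (auto split: if_splits)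
        then have hstep: "h (m + 1) = h m - 1" using step[OF m1(1,2)] by simp
        have wv: "w xs m = int (dR xs)" using wm[OF m1(1,2)] dsc by simp
        have "V xs m"
          unfolding VH
        proof (intro conjI allI impI)
          show "m \<le> N" using m1 by simp
        next
          fix s assume s: "1 \<le> s \<and> s \<le> m"
          then have "\<mu> < h s" using before_f m1 by auto
          then show "h m \<le> h s" using hstep m1 hf by simp
        next
          fix s assume s: "m + 1 \<le> s"
          then show "h (m + 1) \<le> h s" using mu_all[of s] m1 hf by simp
        qed
        then show ?thesis using wv by simp
      qed
    qed
    then show ?thesis by simp
  qed
  show "card {m. V xs m \<and> w xs m = int (dR xs) + 1} = 1"
  proof -
    have "{m. V xs m \<and> w xs m = int (dR xs) + 1} = {L}"
    proof (intro equalityI subsetI)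
      fix m assume "m \<in> {m. V xs m \<and> w xs m = int (dR xs) + 1}"
      then have v: "V xs m" and wm1: "w xs m = int (dR xs) + 1" by auto
      have vv: "m \<le> N" "\<forall>s. 1 \<le> s \<and> s \<le> m \<longrightarrow> h m \<le> h s" "\<forall>s. m + 1 \<le> s \<longrightarrow> h (m + 1) \<le> h s"
        using v unfolding VH by auto
      have m1: "1 \<le> m" using wm1 w0 by (cases m) auto
      have hm_lt: "\<forall>s. m < s \<and> s \<le> N \<longrightarrow> h m < h s"
      proof (cases "m = N")
        case True
        then show ?thesis by simp
      next
        case False
        then have mN: "m < N" using vv by simp
        have "h (m + 1) = h m + 1"
          using step[OF m1 mN] wm[OF m1 mN] wm1 by (auto split: if_splits)
        then show ?thesis
        proof (intro allI impI)
          fix s assume e: "h (m + 1) = h m + 1" and s: "m < s \<and> s \<le> N"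
          then have "m + 1 \<le> s" by simp
          then have "h (m + 1) \<le> h s" using vv(3) by simp
          then show "h m < h s" using e by simp
        qed
      qed
      have hm_mu: "h m = \<mu>"
      proof -
        have "h m \<le> h s" if "s \<in> S" for s
        proof (cases "s \<le> m")
          case True then show ?thesis using vv(2) that by (auto simp: S_def)
        next
          case False
          then have "m < s \<and> s \<le> N" using that by (auto simp: S_def)
          then show ?thesis using hm_lt by force
        qed
        then have "h m \<le> h L" using hL by (auto simp: S_def)
        moreover have "\<mu> \<le> h m" using mu_all m1 by simp
        ultimately show ?thesis using hL by simp
      qed
      have "m = L"
      proof (rule ccontr)
        assume "m \<noteq> L"
        have "m \<in> T" using hm_mu m1 vv by (auto simp: T_def S_def)
        then have "m < L" using L_great \<open>m \<noteq> L\<close> by force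
        then show False using hm_lt hm_mu hL by auto
      qed
      then show "m \<in> {L}" by simp
    next
      fix m assume "m \<in> {L}"
      then have m: "m = L" by simp
      have vL: "V xs L"
        unfolding VH
      proof (intro conjI allI impI)
        show "L \<le> N" using hL by simp
      next
        fix s assume "1 \<le> s \<and> s \<le> L"
        then show "h L \<le> h s" using mu_all hL by simp
      next
        fix s assume s: "L + 1 \<le> s"
        show "h (L + 1) \<le> h s"
        proof (cases "L = N")
          case True then show ?thesis using hbig[of s] hbig[of "L + 1"] s by simp
        next
          case False
          then have LN: "L < N" using hL by simp
          have "\<mu> < h (L + 1)" using after_L LN by simp
          then have "h (L + 1) = \<mu> + 1" using step[OF hL(1) LN] hL by (auto split: if_splits)
          moreover have "\<mu> < h s" using after_L s LN by simp
          ultimately show ?thesis by simp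
        qed
      qed
      have wL: "w xs L = int (dR xs) + 1"
      proof (cases "L = N")
        case True then show ?thesis using wN by simp
      next
        case False
        then have LN: "L < N" using hL by simp
        have "\<mu> < h (L + 1)" using after_L LN by simp
        then have "xs ! (L - 1) < xs ! L" using step[OF hL(1) LN] hL by (auto split: if_splits)
        then show ?thesis using wm[OF hL(1) LN] by simp
      qed
      show "m \<in> {m. V xs m \<and> w xs m = int (dR xs) + 1}" using vL wL m by simp
    qed
    then show ?thesis by simp
  qed
qed

lemma w_range:
  assumes d: "distinct xs" and ne: "xs \<noteq> []" and m: "m \<le> length xs"
  shows "w xs m = int (dR xs) \<or> w xs m = int (dR xs) + 1"
proof -
  consider "m = 0" | "m = length xs" | "1 \<le> m \<and> m < length xs" using m by linarith
  then show ?thesis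
  proof cases
    case 1 then show ?thesis using w_0 by simp
  next
    case 2 then show ?thesis using w_N d ne by simp
  next
    case 3 then show ?thesis using w_mid[OF d] by auto
  qed
qed



definition ordpres :: "(nat \<Rightarrow> nat) \<Rightarrow> nat set \<Rightarrow> bool" where
  "ordpres f A = (\<forall>a\<in>A. \<forall>b\<in>A. f a < f b \<longleftrightarrow> a < b)"

definition invar :: "(nat list \<Rightarrow> bool) \<Rightarrow> bool" where
  "invar P = (\<forall>f xs. ordpres f (set xs) \<longrightarrow> P (map f xs) = P xs)"

lemma ordpres_mono: "ordpres f A \<Longrightarrow> B \<subseteq> A \<Longrightarrow> ordpres f B"
  unfolding ordpres_def by blast

lemma aR_map': "ordpres f (set xs) \<Longrightarrow> aR (map f xs) = aR xs"
  using aR_map unfolding ordpres_def by blast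
lemma dR_map': "ordpres f (set xs) \<Longrightarrow> dR (map f xs) = dR xs"
  using dR_map unfolding ordpres_def by blast
lemma pR_map': "ordpres f (set xs) \<Longrightarrow> pR (map f xs) = pR xs"
  using pR_map unfolding ordpres_def by blast

lemma bal_map: assumes "ordpres f (set xs)" shows "bal (map f xs) = bal xs"
proof -
  have o: "\<And>t. ordpres f (set (take t xs))" by (rule ordpres_mono[OF assms set_take_subset])
  show ?thesis unfolding bal_def length_map take_map aR_map'[OF o] dR_map'[OF o] ..
qed

lemma invar_ballot: "invar (\<lambda>xs. bal xs \<and> P (pR xs) (dR xs))"
  unfolding invar_def using bal_map pR_map' dR_map' by simp

lemma invar_ballot_rev: "invar (\<lambda>xs. bal (rev xs) \<and> P (pR (rev xs)) (dR (rev xs)))"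
  unfolding invar_def using bal_map pR_map' dR_map' by (simp add: rev_map)

lemma finite_arr: "finite S \<Longrightarrow> finite {xs. distinct xs \<and> set xs = S}"
  by (rule finite_subset[OF _ finite_lists_length_eq[of S "card S"]]) (auto simp: distinct_card)

lemma finite_perms: "finite (perms n)"
  unfolding perms_def by (rule finite_arr) simp

lemma enum_exists:
  fixes S :: "nat set"
  assumes "finite S"
  shows "\<exists>g. strict_mono_on {1..card S} g \<and> g ` {1..card S} = S"
proof -
  define ys where "ys = sorted_list_of_set S"
  have sw: "sorted_wrt (<) ys" unfolding ys_def by (rule strict_sorted_list_of_set)
  have ly: "length ys = card S" unfolding ys_def by simp
  have sy: "set ys = S" unfolding ys_def using assms by simp
  define g where "g i = ys ! (i - 1)" for i
  have "strict_mono_on {1..card S} g"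
    unfolding strict_mono_on_def g_def
  proof (intro allI impI)
    fix r s :: nat assume a: "r \<in> {1..card S} \<and> s \<in> {1..card S} \<and> r < s"
    then have "r - 1 < s - 1" "s - 1 < length ys" using ly by auto
    then show "ys ! (r - 1) < ys ! (s - 1)" using sorted_wrt_nth_less[OF sw] by blast
  qed
  moreover have "g ` {1..card S} = S"
  proof
    show "g ` {1..card S} \<subseteq> S" unfolding g_def using ly sy by auto
    show "S \<subseteq> g ` {1..card S}"
    proof
      fix x assume "x \<in> S"
      then obtain i where i: "i < length ys" "ys ! i = x" using sy by (metis in_set_conv_nth)
      then have "g (i + 1) = x" "i + 1 \<in> {1..card S}" using ly by (auto simp: g_def)
      then show "x \<in> g ` {1..card S}" by force
    qed
  qed
  ultimately show ?thesis by blast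
qed

lemma standardize:
  assumes fin: "finite S" and inv: "invar P"
  shows "card {xs. distinct xs \<and> set xs = S \<and> P xs} = card {xs \<in> perms (card S). P xs}"
proof -
  obtain g where sm: "strict_mono_on {1..card S} g" and im: "g ` {1..card S} = S"
    using enum_exists[OF fin] by blast
  let ?I = "{1..card S}"
  have inj: "inj_on g ?I" using sm by (rule strict_mono_on_imp_inj_on)
  have op: "ordpres g ?I" unfolding ordpres_def using sm strict_mono_on_less by blast
  have "map g ` {xs \<in> perms (card S). P xs} = {xs. distinct xs \<and> set xs = S \<and> P xs}"
  proof (intro equalityI subsetI)
    fix ys assume "ys \<in> map g ` {xs \<in> perms (card S). P xs}"
    then obtain xs where xs: "xs \<in> perms (card S)" "P xs" "ys = map g xs" by auto
    have sx: "set xs = ?I" "distinct xs" using xs by (auto simp: perms_def)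
    have "P (map g xs)" using inv xs op sx unfolding invar_def by simp
    moreover have "distinct (map g xs)" using sx inj by (simp add: distinct_map)
    moreover have "set (map g xs) = S" using sx im by simp
    ultimately show "ys \<in> {xs. distinct xs \<and> set xs = S \<and> P xs}" using xs by simp
  next
    fix ys assume ys: "ys \<in> {xs. distinct xs \<and> set xs = S \<and> P xs}"
    define h where "h = inv_into ?I g"
    define xs where "xs = map h ys"
    have bij: "bij_betw g ?I S" using inj im by (simp add: bij_betw_def)
    have bh: "bij_betw h S ?I" unfolding h_def using bij by (rule bij_betw_inv_into)
    have e: "map g xs = ys" unfolding xs_def h_def using ys im by (auto simp: map_idI f_inv_into_f)
    have sx: "set xs = ?I" unfolding xs_def using ys bh by (simp add: bij_betw_def)
    have dx: "distinct xs" unfolding xs_def using ys bh by (simp add: distinct_map bij_betw_def)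
    have "ordpres g (set xs)" using op sx by simp
    then have "P (map g xs) = P xs" using inv unfolding invar_def by blast
    then have "P xs" using e ys by simp
    then have "xs \<in> {xs \<in> perms (card S). P xs}" using sx dx by (simp add: perms_def)
    then show "ys \<in> map g ` {xs \<in> perms (card S). P xs}" using e by blast
  qed
  moreover have "inj_on (map g) {xs \<in> perms (card S). P xs}"
  proof (rule inj_onI)
    fix xs ys assume "xs \<in> {xs \<in> perms (card S). P xs}" "ys \<in> {xs \<in> perms (card S). P xs}" "map g xs = map g ys"
    then show "xs = ys" using inj by (auto simp: perms_def intro: map_inj_on)
  qed
  ultimately show ?thesis by (metis card_image)
qed



lemma pair_count:
  assumes iP: "invar P" and iQ: "invar Q" and lN: "l \<le> N"
  shows "card {(a, b). length a = l \<and> a @ b \<in> perms N \<and> P a \<and> Q b}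
       = (N choose l) * card {xs \<in> perms l. P xs} * card {xs \<in> perms (N - l). Q xs}"
proof -
  define A where "A S = {a. distinct a \<and> set a = S \<and> P a}" for S
  define B where "B S = {b. distinct b \<and> set b = {1..N} - S \<and> Q b}" for S
  define F where "F = {S. S \<subseteq> {1..N} \<and> card S = l}"
  have eq: "{(a, b). length a = l \<and> a @ b \<in> perms N \<and> P a \<and> Q b} = (\<Union>S\<in>F. A S \<times> B S)"
  proof (intro equalityI subsetI)
    fix x assume "x \<in> {(a, b). length a = l \<and> a @ b \<in> perms N \<and> P a \<and> Q b}"
    then obtain a b where x: "x = (a, b)" "length a = l" "a @ b \<in> perms N" "P a" "Q b" by blast
    have d: "distinct a" "distinct b" "set a \<inter> set b = {}" "set a \<union> set b = {1..N}"
      using x by (auto simp: perms_def)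
    have "set a \<in> F" using d x by (auto simp: F_def distinct_card)
    moreover have "a \<in> A (set a)" using d x by (simp add: A_def)
    moreover have "b \<in> B (set a)" using d x by (auto simp: B_def)
    ultimately show "x \<in> (\<Union>S\<in>F. A S \<times> B S)" using x by blast
  next
    fix x assume "x \<in> (\<Union>S\<in>F. A S \<times> B S)"
    then obtain S a b where x: "x = (a, b)" "S \<in> F" "a \<in> A S" "b \<in> B S" by blast
    have "length a = l" using x by (auto simp: F_def A_def dest: distinct_card)
    moreover have "a @ b \<in> perms N" using x by (auto simp: F_def A_def B_def perms_def)
    ultimately show "x \<in> {(a, b). length a = l \<and> a @ b \<in> perms N \<and> P a \<and> Q b}"
      using x by (auto simp: A_def B_def)
  qed
  have finF: "finite F" unfolding F_def by (rule finite_subset[of _ "Pow {1..N}"]) auto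
  have finAB: "\<And>S. S \<in> F \<Longrightarrow> finite (A S \<times> B S)"
  proof -
    fix S assume "S \<in> F"
    have "finite (A S)" unfolding A_def
      by (rule finite_subset[OF _ finite_arr[of S]]) (use \<open>S \<in> F\<close> in \<open>auto simp: F_def intro: finite_subset\<close>)
    moreover have "finite (B S)" unfolding B_def
      by (rule finite_subset[OF _ finite_arr[of "{1..N} - S"]]) auto
    ultimately show "finite (A S \<times> B S)" by simp
  qed
  have disj: "\<forall>S\<in>F. \<forall>S'\<in>F. S \<noteq> S' \<longrightarrow> (A S \<times> B S) \<inter> (A S' \<times> B S') = {}"
  proof (intro ballI impI)
    fix S S' assume "S \<in> F" "S' \<in> F" "S \<noteq> S'"
    then show "(A S \<times> B S) \<inter> (A S' \<times> B S') = {}" unfolding A_def by blast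
  qed
  have cA: "\<And>S. S \<in> F \<Longrightarrow> card (A S) = card {xs \<in> perms l. P xs}"
  proof -
    fix S assume S: "S \<in> F"
    then have "finite S" "card S = l" by (auto simp: F_def intro: finite_subset)
    then show "card (A S) = card {xs \<in> perms l. P xs}" unfolding A_def using standardize[OF _ iP, of S] by simp
  qed
  have cB: "\<And>S. S \<in> F \<Longrightarrow> card (B S) = card {xs \<in> perms (N - l). Q xs}"
  proof -
    fix S assume S: "S \<in> F"
    then have "S \<subseteq> {1..N}" "card S = l" by (auto simp: F_def)
    moreover have "finite S" using \<open>S \<subseteq> {1..N}\<close> finite_subset by blast
    ultimately have "card ({1..N} - S) = N - l" by (simp add: card_Diff_subset)
    moreover have "finite ({1..N} - S)" by simp
    ultimately show "card (B S) = card {xs \<in> perms (N - l). Q xs}" unfolding B_def using standardize[OF _ iQ, of "{1..N} - S"] by simp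
  qed
  have "card (\<Union>S\<in>F. A S \<times> B S) = (\<Sum>S\<in>F. card (A S \<times> B S))"
    by (rule card_UN_disjoint[OF finF]) (use finAB disj in auto)
  also have "\<dots> = (\<Sum>S\<in>F. card {xs \<in> perms l. P xs} * card {xs \<in> perms (N - l). Q xs})"
    by (rule sum.cong) (auto simp: card_cartesian_product cA cB)
  also have "\<dots> = card F * (card {xs \<in> perms l. P xs} * card {xs \<in> perms (N - l). Q xs})" by simp
  also have "card F = N choose l" unfolding F_def using n_subsets[of "{1..N}" l] by simp
  finally show ?thesis unfolding eq by (simp add: mult.assoc)
qed



lemma perms_len: "xs \<in> perms n \<Longrightarrow> length xs = n"
  unfolding perms_def by (metis (mono_tags) card_atLeastAtMost diff_Suc_1 distinct_card mem_Collect_eq)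

lemma perms_distinct: "xs \<in> perms n \<Longrightarrow> distinct xs"
  unfolding perms_def by simp

lemma ballot_eq: "ballot n = {xs \<in> perms n. bal xs}"
  unfolding ballot_def bal_def using perms_len by (auto simp: asc_eq des_eq)

lemma p_eq: "n \<ge> 0 \<Longrightarrow> p_pkdes n k d = int (card {xs \<in> perms (nat n). int (pR xs) = k \<and> int (dR xs) = d})"
  unfolding p_pkdes_def by (auto simp: pk_eq des_eq)

lemma b_eq: "l \<ge> 0 \<Longrightarrow> b_pkdes l i j = int (card {xs \<in> perms (nat l). bal xs \<and> int (pR xs) = i \<and> int (dR xs) = j})"
  unfolding b_pkdes_def ballot_eq by (auto simp: pk_eq des_eq intro!: arg_cong[where f=card])

lemma perms_rev: "xs \<in> perms n \<longleftrightarrow> rev xs \<in> perms n"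
  unfolding perms_def by auto

lemma b_rev: "card {xs \<in> perms l. bal (rev xs) \<and> int (pR (rev xs)) = i \<and> int (dR (rev xs)) = j}
  = card {xs \<in> perms l. bal xs \<and> int (pR xs) = i \<and> int (dR xs) = j}"
proof -
  have "{xs \<in> perms l. bal (rev xs) \<and> int (pR (rev xs)) = i \<and> int (dR (rev xs)) = j}
     = rev ` {xs \<in> perms l. bal xs \<and> int (pR xs) = i \<and> int (dR xs) = j}"
  proof (intro equalityI subsetI)
    fix x assume "x \<in> {xs \<in> perms l. bal (rev xs) \<and> int (pR (rev xs)) = i \<and> int (dR (rev xs)) = j}"
    then show "x \<in> rev ` {xs \<in> perms l. bal xs \<and> int (pR xs) = i \<and> int (dR xs) = j}"
      using perms_rev by (auto intro!: image_eqI[of x rev "rev x"])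
  next
    fix x assume "x \<in> rev ` {xs \<in> perms l. bal xs \<and> int (pR xs) = i \<and> int (dR xs) = j}"
    then show "x \<in> {xs \<in> perms l. bal (rev xs) \<and> int (pR (rev xs)) = i \<and> int (dR (rev xs)) = j}"
      using perms_rev by auto
  qed
  then show ?thesis by (simp add: card_image)
qed

lemma term_eq:
  assumes "L \<le> N"
  shows "binom (int N) (int L) * b_pkdes (int L) i j * b_pkdes (int N - int L) (k - i) (d - int L + j)
   = int (card {(a, b). length a = L \<and> a @ b \<in> perms N
        \<and> (bal (rev a) \<and> int (pR (rev a)) = i \<and> int (dR (rev a)) = j)
        \<and> (bal b \<and> int (pR b) = k - i \<and> int (dR b) = d - int L + j)})"
proof -
  have iP: "invar (\<lambda>a. bal (rev a) \<and> int (pR (rev a)) = i \<and> int (dR (rev a)) = j)"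
    using invar_ballot_rev[of "\<lambda>x y. int x = i \<and> int y = j"] by simp
  have iQ: "invar (\<lambda>b. bal b \<and> int (pR b) = k - i \<and> int (dR b) = d - int L + j)"
    using invar_ballot[of "\<lambda>x y. int x = k - i \<and> int y = d - int L + j"] by simp
  have nl: "int N - int L = int (N - L)" using assms by simp
  have nl2: "nat (int N - int L) = N - L" using assms by simp
  show ?thesis
    unfolding pair_count[OF iP iQ assms] b_rev nl b_eq[OF of_nat_0_le_iff] binom_def
    using assms nl2 by simp
qed

lemma card_sum_int: "finite A \<Longrightarrow> int (card {x \<in> A. Q x}) = (\<Sum>x\<in>A. if Q x then 1 else 0)"
proof -
  assume f: "finite A"
  have "(\<Sum>x\<in>A. if Q x then 1 else 0::nat) = (\<Sum>x\<in>{x \<in> A. Q x}. 1::nat)"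
    using f by (simp only: sum.inter_filter)
  then have "card {x \<in> A. Q x} = (\<Sum>x\<in>A. if Q x then 1 else 0::nat)" by simp
  then have "int (card {x \<in> A. Q x}) = (\<Sum>x\<in>A. int (if Q x then 1 else 0))" by (simp add: of_nat_sum)
  also have "\<dots> = (\<Sum>x\<in>A. if Q x then 1 else 0)" by (rule sum.cong) auto
  finally show ?thesis .
qed

lemma sum_fiber:
  assumes fA: "finite A" and fI: "finite I" and fJ: "finite J"
    and r: "\<And>x. x \<in> A \<Longrightarrow> F x \<in> I \<and> G x \<in> J"
  shows "(\<Sum>i\<in>I. \<Sum>j\<in>J. int (card {x \<in> A. F x = i \<and> G x = j \<and> C x i j}))
       = int (card {x \<in> A. C x (F x) (G x)})"
proof -
  have "(\<Sum>i\<in>I. \<Sum>j\<in>J. int (card {x \<in> A. F x = i \<and> G x = j \<and> C x i j}))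
     = (\<Sum>i\<in>I. \<Sum>j\<in>J. \<Sum>x\<in>A. if F x = i \<and> G x = j \<and> C x i j then 1 else 0)"
    using fA by (simp add: card_sum_int)
  also have "\<dots> = (\<Sum>i\<in>I. \<Sum>x\<in>A. \<Sum>j\<in>J. if F x = i \<and> G x = j \<and> C x i j then 1 else 0)"
    by (rule sum.cong[OF refl], rule sum.swap)
  also have "\<dots> = (\<Sum>x\<in>A. \<Sum>i\<in>I. \<Sum>j\<in>J. if F x = i \<and> G x = j \<and> C x i j then 1 else 0)"
    by (rule sum.swap)
  also have "\<dots> = (\<Sum>x\<in>A. if C x (F x) (G x) then 1 else 0)"
  proof (rule sum.cong[OF refl])
    fix x assume x: "x \<in> A"
    have "(\<Sum>i\<in>I. \<Sum>j\<in>J. if F x = i \<and> G x = j \<and> C x i j then 1 else (0::int))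
        = (\<Sum>i\<in>I. if F x = i then (\<Sum>j\<in>J. if G x = j then (if C x i j then 1 else 0) else 0) else 0)"
      by (rule sum.cong[OF refl]) (auto intro: sum.cong)
    also have "\<dots> = (\<Sum>i\<in>I. if F x = i then (if C x i (G x) then 1 else 0) else 0)"
      using r[OF x] fJ by (auto intro!: sum.cong)
    also have "\<dots> = (if C x (F x) (G x) then 1 else 0)"
      using r[OF x] fI by simp
    finally show "(\<Sum>i\<in>I. \<Sum>j\<in>J. if F x = i \<and> G x = j \<and> C x i j then 1 else (0::int)) = (if C x (F x) (G x) then 1 else 0)" .
  qed
  also have "\<dots> = int (card {x \<in> A. C x (F x) (G x)})" using fA by (simp add: card_sum_int)
  finally show ?thesis .
qed

lemma pR_le: "pR xs \<le> length xs" by (induction xs rule: pR.induct) auto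
lemma dR_le: "dR xs \<le> length xs" by (induction xs rule: dR.induct) auto



lemma bal_Nil[simp]: "bal []" by (simp add: bal_def)

lemma per_pi:
  assumes p: "xs \<in> perms N" and ex: "xs = [] \<longrightarrow> \<not> (k = 0 \<and> d = 1)"
  shows "int (card {m. V xs m \<and> int (pR (drop m xs)) = k - int (pR (rev (take m xs)))
            \<and> int (dR (drop m xs)) = d - int m + int (dR (rev (take m xs)))})
     = (if int (pR xs) = k then (if int (dR xs) = d then 1 else 0) + (if int (dR xs) = d - 1 then 1 else 0) else 0)"
proof -
  have dx: "distinct xs" using p by (rule perms_distinct)
  have eq: "{m. V xs m \<and> int (pR (drop m xs)) = k - int (pR (rev (take m xs)))
            \<and> int (dR (drop m xs)) = d - int m + int (dR (rev (take m xs)))}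
          = {m. V xs m \<and> int (pR xs) = k \<and> w xs m = d}"
  proof (intro Collect_cong iffI)
    fix m assume a: "V xs m \<and> int (pR (drop m xs)) = k - int (pR (rev (take m xs)))
            \<and> int (dR (drop m xs)) = d - int m + int (dR (rev (take m xs)))"
    then have "pR xs = pR (take m xs) + pR (drop m xs)" using pk_split dx by blast
    then show "V xs m \<and> int (pR xs) = k \<and> w xs m = d" using a by (simp add: pR_rev dR_rev w_def)
  next
    fix m assume a: "V xs m \<and> int (pR xs) = k \<and> w xs m = d"
    then have "pR xs = pR (take m xs) + pR (drop m xs)" using pk_split dx by blast
    then show "V xs m \<and> int (pR (drop m xs)) = k - int (pR (rev (take m xs)))
            \<and> int (dR (drop m xs)) = d - int m + int (dR (rev (take m xs)))"
      using a by (simp add: pR_rev dR_rev w_def)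
  qed
  show ?thesis
  proof (cases "xs = []")
    case True
    have "{m. V xs m \<and> int (pR xs) = k \<and> w xs m = d} = (if k = 0 \<and> d = 0 then {0} else {})"
      using True by (auto simp: V_def w_def)
    then show ?thesis unfolding eq using True ex by auto
  next
    case False
    show ?thesis
    proof (cases "int (pR xs) = k")
      case False then show ?thesis unfolding eq by simp
    next
      case True
      have e2: "{m. V xs m \<and> int (pR xs) = k \<and> w xs m = d} = {m. V xs m \<and> w xs m = d}"
        using True by simp
      consider "d = int (dR xs)" | "d = int (dR xs) + 1" | "d \<noteq> int (dR xs) \<and> d \<noteq> int (dR xs) + 1" by blast
      then show ?thesis
      proof cases
        case 1 then show ?thesis unfolding eq e2 using core(1)[OF dx False] True by simp
      next
        case 2 then show ?thesis unfolding eq e2 using core(2)[OF dx False] True by simp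
      next
        case 3
        have E: "{m. V xs m \<and> w xs m = d} = {}"
          using w_range[OF dx False] 3 by (auto simp: V_def)
        show ?thesis unfolding eq e2 E using True 3 by simp
      qed
    qed
  qed
qed

theorem theorem3p1:
  fixes n k d :: int
  assumes "n \<ge> 0" and "k \<ge> 0" and "d \<ge> 0" and "(n, k, d) \<noteq> (0, 0, 1)"
  shows "p_pkdes n k d + p_pkdes n k (d - 1) =
    (\<Sum>l\<in>{0..n}. \<Sum>i\<in>{0..n}. \<Sum>j\<in>{0..n}.
       binom n l * b_pkdes l i j * b_pkdes (n - l) (k - i) (d - l + j))"
proof -
  obtain N where nN: "n = int N" using assms(1) by (metis nonneg_eq_int)
  define A where "A L = {(a, b). length a = L \<and> a @ b \<in> perms N \<and> bal (rev a) \<and> bal b}" for L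
  define F where "F x = int (pR (rev (fst x)))" for x :: "nat list \<times> nat list"
  define G where "G x = int (dR (rev (fst x)))" for x :: "nat list \<times> nat list"
  define C where "C L x i j = (int (pR (snd x)) = k - i \<and> int (dR (snd x)) = d - int L + j)"
    for L and x :: "nat list \<times> nat list" and i j
  define Bs where "Bs L = {x \<in> A L. C L x (F x) (G x)}" for L
  define M where "M xs = {m. V xs m \<and> C m (take m xs, drop m xs) (F (take m xs, drop m xs)) (G (take m xs, drop m xs))}" for xs
  define val where "val xs = (if int (pR xs) = k then (if int (dR xs) = d then 1 else 0) + (if int (dR xs) = d - 1 then 1 else 0) else (0::int))" for xs
  have finA: "finite (A L)" for L
  proof (rule finite_subset[OF _ finite_imageI[OF finite_perms[of N], of "\<lambda>xs. (take L xs, drop L xs)"]])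
    show "A L \<subseteq> (\<lambda>xs. (take L xs, drop L xs)) ` perms N"
      unfolding A_def by (auto intro!: image_eqI[of _ _ "_ @ _"])
  qed
  have finB: "finite (Bs L)" for L unfolding Bs_def using finA by simp
  have finM: "finite (M xs)" for xs
    by (rule finite_subset[of _ "{0..length xs}"]) (auto simp: M_def V_def)
  have LHS: "p_pkdes n k d + p_pkdes n k (d - 1) = (\<Sum>xs\<in>perms N. val xs)"
  proof -
    have "p_pkdes n k d + p_pkdes n k (d - 1)
       = (\<Sum>xs\<in>perms N. if int (pR xs) = k \<and> int (dR xs) = d then 1 else 0)
       + (\<Sum>xs\<in>perms N. if int (pR xs) = k \<and> int (dR xs) = d - 1 then 1 else 0)"
    proof -
      have pe: "\<And>k d. p_pkdes n k d = int (card {xs \<in> perms N. int (pR xs) = k \<and> int (dR xs) = d})"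
        using p_eq[OF assms(1)] nN by simp
      show ?thesis unfolding pe using finite_perms by (simp add: card_sum_int)
    qed
    also have "\<dots> = (\<Sum>xs\<in>perms N. val xs)"
      by (simp add: sum.distrib[symmetric] val_def) (rule sum.cong, auto)
    finally show ?thesis .
  qed
  have inner: "(\<Sum>i\<in>{0..n}. \<Sum>j\<in>{0..n}. binom n (int L) * b_pkdes (int L) i j * b_pkdes (n - int L) (k - i) (d - int L + j))
      = int (card (Bs L))" if L: "L \<le> N" for L
  proof -
    have "(\<Sum>i\<in>{0..n}. \<Sum>j\<in>{0..n}. binom n (int L) * b_pkdes (int L) i j * b_pkdes (n - int L) (k - i) (d - int L + j))
      = (\<Sum>i\<in>{0..n}. \<Sum>j\<in>{0..n}. int (card {x \<in> A L. F x = i \<and> G x = j \<and> C L x i j}))"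
    proof (intro sum.cong refl)
      fix i j
      have "{(a, b). length a = L \<and> a @ b \<in> perms N
        \<and> (bal (rev a) \<and> int (pR (rev a)) = i \<and> int (dR (rev a)) = j)
        \<and> (bal b \<and> int (pR b) = k - i \<and> int (dR b) = d - int L + j)} = {x \<in> A L. F x = i \<and> G x = j \<and> C L x i j}"
        by (auto simp: A_def F_def G_def C_def)
      then show "binom n (int L) * b_pkdes (int L) i j * b_pkdes (n - int L) (k - i) (d - int L + j)
          = int (card {x \<in> A L. F x = i \<and> G x = j \<and> C L x i j})"
        using term_eq[OF L, of i j k d] unfolding nN by simp
    qed
    also have "\<dots> = int (card {x \<in> A L. C L x (F x) (G x)})"
    proof (rule sum_fiber[OF finA])
      fix x assume x: "x \<in> A L"
      obtain a b where ab: "x = (a, b)" by fastforce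
      have "length a = L" using x ab by (simp add: A_def)
      then have "pR (rev a) \<le> N" "dR (rev a) \<le> N" using L pR_le[of "rev a"] dR_le[of "rev a"] by auto
      then show "F x \<in> {0..n} \<and> G x \<in> {0..n}" unfolding F_def G_def nN ab by simp
    qed simp_all
    finally show ?thesis unfolding Bs_def .
  qed
  have "(\<Sum>l\<in>{0..n}. \<Sum>i\<in>{0..n}. \<Sum>j\<in>{0..n}.
       binom n l * b_pkdes l i j * b_pkdes (n - l) (k - i) (d - l + j))
     = (\<Sum>L\<in>{0..N}. \<Sum>i\<in>{0..n}. \<Sum>j\<in>{0..n}.
       binom n (int L) * b_pkdes (int L) i j * b_pkdes (n - int L) (k - i) (d - int L + j))"
  proof -
    have "{0..n} = int ` {0..N}" unfolding nN by (simp add: image_int_atLeastAtMost)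
    then show ?thesis by (simp add: sum.reindex)
  qed
  also have "\<dots> = (\<Sum>L\<in>{0..N}. int (card (Bs L)))"
    by (rule sum.cong) (auto simp: inner)
  also have "\<dots> = int (card (SIGMA L:{0..N}. Bs L))"
    using finB by (simp add: of_nat_sum)
  also have "card (SIGMA L:{0..N}. Bs L) = card (SIGMA xs:perms N. M xs)"
  proof (rule bij_betw_same_card)
    show "bij_betw (\<lambda>(L, (a, b)). (a @ b, L)) (SIGMA L:{0..N}. Bs L) (SIGMA xs:perms N. M xs)"
    proof (rule bij_betw_byWitness[where f' = "\<lambda>(xs, m). (m, (take m xs, drop m xs))"])
      show "\<forall>x\<in>(SIGMA L:{0..N}. Bs L). (\<lambda>(xs, m). (m, (take m xs, drop m xs))) ((\<lambda>(L, (a, b)). (a @ b, L)) x) = x"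
        by (auto simp: Bs_def A_def)
      show "\<forall>y\<in>(SIGMA xs:perms N. M xs). (\<lambda>(L, (a, b)). (a @ b, L)) ((\<lambda>(xs, m). (m, (take m xs, drop m xs))) y) = y"
        by auto
      show "(\<lambda>(L, (a, b)). (a @ b, L)) ` (SIGMA L:{0..N}. Bs L) \<subseteq> (SIGMA xs:perms N. M xs)"
        by (auto simp: Bs_def A_def M_def V_def)
      show "(\<lambda>(xs, m). (m, (take m xs, drop m xs))) ` (SIGMA xs:perms N. M xs) \<subseteq> (SIGMA L:{0..N}. Bs L)"
      proof
        fix z assume "z \<in> (\<lambda>(xs, m). (m, (take m xs, drop m xs))) ` (SIGMA xs:perms N. M xs)"
        then obtain xs m where z: "z = (m, (take m xs, drop m xs))" "xs \<in> perms N" "m \<in> M xs" by auto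
        have "length xs = N" using z perms_len by blast
        then show "z \<in> (SIGMA L:{0..N}. Bs L)" using z by (auto simp: Bs_def A_def M_def V_def)
      qed
    qed
  qed
  also have "int (card (SIGMA xs:perms N. M xs)) = (\<Sum>xs\<in>perms N. int (card (M xs)))"
    using finM finite_perms by (simp add: of_nat_sum)
  also have "\<dots> = (\<Sum>xs\<in>perms N. val xs)"
  proof (rule sum.cong[OF refl])
    fix xs assume xs: "xs \<in> perms N"
    have ex: "xs = [] \<longrightarrow> \<not> (k = 0 \<and> d = 1)"
    proof
      assume "xs = []"
      then have "N = 0" using xs perms_len by fastforce
      then show "\<not> (k = 0 \<and> d = 1)" using assms(4) nN by auto
    qed
    have "M xs = {m. V xs m \<and> int (pR (drop m xs)) = k - int (pR (rev (take m xs)))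
            \<and> int (dR (drop m xs)) = d - int m + int (dR (rev (take m xs)))}"
      by (simp add: M_def C_def F_def G_def)
    then show "int (card (M xs)) = val xs" using per_pi[OF xs ex] by (simp add: val_def)
  qed
  finally show ?thesis using LHS by simp
qed


end
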